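(* Let $(W,S)$ be a finitely generated Coxeter system and $v\in W$. Then $$\sum_{x\le v}\mu(e,x)\,t^{|S(x)|}=(1-t)^{|\mathrm{Des}(v)|},$$ where the sum is over all $x\in W$ with $x\le v$ and $\mu$ is the Möbius function of $(W,\le)$.
   Context: $(W,S)$ is a finitely generated Coxeter system with length function $\ell$ and identity $e$. For $w\in W$, $S(w)\subseteq S$ is the set of simple reflections appearing in a (any) reduced expression of $w$, and $\mathrm{Des}(w)=\{s\in S:\ell(ws)<\ell(w)\}$. For $I\subseteq S$, $W_I$ is the parabolic subgroup generated by $I$, $X_I=\{u\in W:\ell(us)>\ell(u)\ \forall s\in I\}$, and every $w\in W$ factors uniquely as $w=w^Iw_I$ with $w^I\in X_I$, $w_I\in W_I$ (parabolic components along $I$). The partial order on $W$: $u\le v$ iff $v_{S(u)}=u$ (so $e\le x$ for all $x$). *)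

theory Defs
  imports "HOL-Algebra.Generated_Groups" "HOL-Computational_Algebra.Polynomial"
begin

definition word_prod :: "('a, 'b) monoid_scheme \<Rightarrow> 'a list \<Rightarrow> 'a" where
  "word_prod G ws = foldr (\<lambda>a b. a \<otimes>\<^bsub>G\<^esub> b) ws \<one>\<^bsub>G\<^esub>"

definition coxeter_relators :: "('a, 'b) monoid_scheme \<Rightarrow> 'a set \<Rightarrow> 'a list set" where
  "coxeter_relators G S =
     {[s, s] | s. s \<in> S} \<union>
     {concat (replicate m [s, t]) | s t m. s \<in> S \<and> t \<in> S \<and> 0 < m \<and>
        (s \<otimes>\<^bsub>G\<^esub> t) [^]\<^bsub>G\<^esub> m = \<one>\<^bsub>G\<^esub>}"

definition relator_step :: "('a, 'b) monoid_scheme \<Rightarrow> 'a set \<Rightarrow> ('a list \<times> 'a list) set" where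
  "relator_step G S = {(xs @ r @ ys, xs @ ys) | xs r ys. r \<in> coxeter_relators G S}"

text \<open>(W,S) is a finitely generated Coxeter system: S is a finite generating set of
  involutions, and the Coxeter relations present W, i.e. every word in S that evaluates
  to the identity is equal to the empty word modulo the relators.\<close>
definition coxeter_system :: "('a, 'b) monoid_scheme \<Rightarrow> 'a set \<Rightarrow> bool" where
  "coxeter_system G S \<longleftrightarrow>
     group G \<and> finite S \<and> S \<subseteq> carrier G \<and> \<one>\<^bsub>G\<^esub> \<notin> S \<and>
     (\<forall>s\<in>S. s \<otimes>\<^bsub>G\<^esub> s = \<one>\<^bsub>G\<^esub>) \<and>
     generate G S = carrier G \<and>
     (\<forall>ws \<in> lists S. word_prod G ws = \<one>\<^bsub>G\<^esub> \<longrightarrow>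
        (ws, []) \<in> (relator_step G S \<union> (relator_step G S)\<inverse>)\<^sup>*)"

definition cox_length :: "('a, 'b) monoid_scheme \<Rightarrow> 'a set \<Rightarrow> 'a \<Rightarrow> nat" where
  "cox_length G S w = (LEAST n. \<exists>ws \<in> lists S. length ws = n \<and> word_prod G ws = w)"

definition reduced_word :: "('a, 'b) monoid_scheme \<Rightarrow> 'a set \<Rightarrow> 'a \<Rightarrow> 'a list \<Rightarrow> bool" where
  "reduced_word G S w ws \<longleftrightarrow>
     ws \<in> lists S \<and> word_prod G ws = w \<and> length ws = cox_length G S w"

text \<open>S(w): the simple reflections appearing in a reduced expression of w (it is the same
  set for every reduced expression; we take the union over all of them).\<close>
definition cox_support :: "('a, 'b) monoid_scheme \<Rightarrow> 'a set \<Rightarrow> 'a \<Rightarrow> 'a set" where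
  "cox_support G S w = \<Union> {set ws | ws. reduced_word G S w ws}"

definition descents :: "('a, 'b) monoid_scheme \<Rightarrow> 'a set \<Rightarrow> 'a \<Rightarrow> 'a set" where
  "descents G S w = {s \<in> S. cox_length G S (w \<otimes>\<^bsub>G\<^esub> s) < cox_length G S w}"

definition min_reps :: "('a, 'b) monoid_scheme \<Rightarrow> 'a set \<Rightarrow> 'a set \<Rightarrow> 'a set" where
  "min_reps G S I = {u \<in> carrier G. \<forall>s\<in>I. cox_length G S (u \<otimes>\<^bsub>G\<^esub> s) > cox_length G S u}"

text \<open>The parabolic component w_I in W_I of w = w^I w_I.\<close>
definition parabolic_comp :: "('a, 'b) monoid_scheme \<Rightarrow> 'a set \<Rightarrow> 'a set \<Rightarrow> 'a \<Rightarrow> 'a" where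
  "parabolic_comp G S I w =
     (THE u. u \<in> generate G I \<and> w \<otimes>\<^bsub>G\<^esub> inv\<^bsub>G\<^esub> u \<in> min_reps G S I)"

definition cox_le :: "('a, 'b) monoid_scheme \<Rightarrow> 'a set \<Rightarrow> 'a \<Rightarrow> 'a \<Rightarrow> bool" where
  "cox_le G S u v \<longleftrightarrow> parabolic_comp G S (cox_support G S u) v = u"

definition is_moebius :: "'a set \<Rightarrow> ('a \<Rightarrow> 'a \<Rightarrow> bool) \<Rightarrow> ('a \<Rightarrow> 'a \<Rightarrow> int) \<Rightarrow> bool" where
  "is_moebius A R f \<longleftrightarrow>
     (\<forall>x y. f x y =
        (if x \<in> A \<and> y \<in> A \<and> R x y then
           (if x = y then 1
            else - (\<Sum>z \<in> {z \<in> A. R x z \<and> R z y \<and> z \<noteq> y}. f x z))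
         else 0))"

definition moebius :: "'a set \<Rightarrow> ('a \<Rightarrow> 'a \<Rightarrow> bool) \<Rightarrow> 'a \<Rightarrow> 'a \<Rightarrow> int" where
  "moebius A R = (THE f. is_moebius A R f)"

end

theory Submission imports Defs begin

lemma binom_poly: fixes A :: "'x set" assumes "finite A"
  shows "(\<Sum>D\<in>Pow A. smult ((-1) ^ card D) ([:0, 1:] ^ card D)) = ([:1, -1:] :: int poly) ^ card A"
proof -
  have e: "[:0, -1:] + 1 = ([:1, -1:] :: int poly)" by (simp add: one_pCons)
  have "([:1, -1:] :: int poly) ^ card A = (\<Prod>x\<in>A. [:0, -1:] + 1)"
    unfolding e by simp
  also have "\<dots> = (\<Sum>X\<in>Pow A. (\<Prod>x\<in>X. [:0, -1:]) * (\<Prod>x\<in>A-X. 1))"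
    by (rule prod_add[OF assms])
  also have "\<dots> = (\<Sum>D\<in>Pow A. smult ((-1) ^ card D) ([:0, 1:] ^ card D))"
  proof (rule sum.cong[OF refl])
    fix X :: "'x set"
    have "([:0, -1:] :: int poly) ^ card X = (smult (-1) [:0, 1:]) ^ card X" by simp
    also have "\<dots> = smult ((-1) ^ card X) (([:0, 1:] :: int poly) ^ card X)" by (rule smult_power)
    finally show "(\<Prod>x\<in>X. [:0, -1:]) * (\<Prod>x\<in>A-X. 1) = smult ((-1) ^ card X) (([:0, 1:] :: int poly) ^ card X)"
      by simp
  qed
  finally show ?thesis by simp
qed


fun Mf :: "'a set \<Rightarrow> ('a \<Rightarrow> 'a \<Rightarrow> bool) \<Rightarrow> nat \<Rightarrow> 'a \<Rightarrow> 'a \<Rightarrow> int" where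
  "Mf A R 0 x y = 0"
| "Mf A R (Suc n) x y = (if x \<in> A \<and> y \<in> A \<and> R x y then (if x = y then 1
      else - (\<Sum>z\<in>{z\<in>A. R x z \<and> R z y \<and> z \<noteq> y}. Mf A R n x z)) else 0)"

lemma moeb_ex:
  fixes m :: "'a \<Rightarrow> nat"
  assumes dec: "\<And>z y. z \<in> A \<Longrightarrow> y \<in> A \<Longrightarrow> R z y \<Longrightarrow> z \<noteq> y \<Longrightarrow> m z < m y"
  shows "is_moebius A R (\<lambda>x y. Mf A R (Suc (m y)) x y)"
proof -
  define f where "f = (\<lambda>x y. Mf A R (Suc (m y)) x y)"
  have key: "\<And>x y. m y < n \<Longrightarrow> Mf A R n x y = f x y" for n
  proof (induction n rule: less_induct)
    case (less n x y)
    then obtain k where n: "n = Suc k" by (cases n) auto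
    show ?case
    proof (cases "x \<in> A \<and> y \<in> A \<and> R x y \<and> x \<noteq> y")
      case True
      have "(\<Sum>z\<in>{z\<in>A. R x z \<and> R z y \<and> z \<noteq> y}. Mf A R k x z)
          = (\<Sum>z\<in>{z\<in>A. R x z \<and> R z y \<and> z \<noteq> y}. Mf A R (m y) x z)"
      proof (rule sum.cong[OF refl])
        fix z assume z: "z \<in> {z\<in>A. R x z \<and> R z y \<and> z \<noteq> y}"
        then have mz: "m z < m y" using dec True by auto
        have "Mf A R k x z = f x z" using less.IH[of k z x] n less.prems mz by simp
        moreover have "Mf A R (m y) x z = f x z" using less.IH[of "m y" z x] n less.prems mz by simp
        ultimately show "Mf A R k x z = Mf A R (m y) x z" by simp
      qed
      then show ?thesis using True n unfolding f_def by simp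
    next
      case False
      then show ?thesis using n unfolding f_def by auto
    qed
  qed
  show ?thesis unfolding is_moebius_def
  proof (intro allI)
    fix x y
    show "Mf A R (Suc (m y)) x y = (if x \<in> A \<and> y \<in> A \<and> R x y then (if x = y then 1
      else - (\<Sum>z\<in>{z\<in>A. R x z \<and> R z y \<and> z \<noteq> y}. Mf A R (Suc (m z)) x z)) else 0)"
    proof (cases "x \<in> A \<and> y \<in> A \<and> R x y \<and> x \<noteq> y")
      case True
      have "(\<Sum>z\<in>{z\<in>A. R x z \<and> R z y \<and> z \<noteq> y}. Mf A R (m y) x z)
          = (\<Sum>z\<in>{z\<in>A. R x z \<and> R z y \<and> z \<noteq> y}. Mf A R (Suc (m z)) x z)"
      proof (rule sum.cong[OF refl])
        fix z assume z: "z \<in> {z\<in>A. R x z \<and> R z y \<and> z \<noteq> y}"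
        then have mz: "m z < m y" using dec True by auto
        show "Mf A R (m y) x z = Mf A R (Suc (m z)) x z" using key[OF mz] unfolding f_def by simp
      qed
      then show ?thesis using True by simp
    next
      case False
      then show ?thesis by auto
    qed
  qed
qed

lemma moeb_unique:
  fixes m :: "'a \<Rightarrow> nat"
  assumes dec: "\<And>z y. z \<in> A \<Longrightarrow> y \<in> A \<Longrightarrow> R z y \<Longrightarrow> z \<noteq> y \<Longrightarrow> m z < m y"
    and f: "is_moebius A R f" and g: "is_moebius A R g"
  shows "f = g"
proof -
  have "\<forall>x. f x y = g x y" for y
  proof (induction y rule: measure_induct_rule[of m])
    case (less y)
    show ?case
    proof
      fix x
      have ff: "f x y = (if x \<in> A \<and> y \<in> A \<and> R x y then (if x = y then 1
          else - (\<Sum>z\<in>{z\<in>A. R x z \<and> R z y \<and> z \<noteq> y}. f x z)) else 0)"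
        using f unfolding is_moebius_def by blast
      have gg: "g x y = (if x \<in> A \<and> y \<in> A \<and> R x y then (if x = y then 1
          else - (\<Sum>z\<in>{z\<in>A. R x z \<and> R z y \<and> z \<noteq> y}. g x z)) else 0)"
        using g unfolding is_moebius_def by blast
      show "f x y = g x y"
      proof (cases "x \<in> A \<and> y \<in> A \<and> R x y \<and> x \<noteq> y")
        case True
        have "(\<Sum>z\<in>{z\<in>A. R x z \<and> R z y \<and> z \<noteq> y}. f x z) = (\<Sum>z\<in>{z\<in>A. R x z \<and> R z y \<and> z \<noteq> y}. g x z)"
        proof (rule sum.cong[OF refl])
          fix z assume z: "z \<in> {z\<in>A. R x z \<and> R z y \<and> z \<noteq> y}"
          then have mz: "m z < m y" using dec True by auto
          then show "f x z = g x z" using less by blast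
        qed
        then show ?thesis using ff gg True by simp
      next
        case False
        then show ?thesis using ff gg by auto
      qed
    qed
  qed
  then show ?thesis by blast
qed

lemma moebius_is:
  fixes m :: "'a \<Rightarrow> nat"
  assumes dec: "\<And>z y. z \<in> A \<Longrightarrow> y \<in> A \<Longrightarrow> R z y \<Longrightarrow> z \<noteq> y \<Longrightarrow> m z < m y"
  shows "is_moebius A R (moebius A R)"
proof -
  have ex: "is_moebius A R (\<lambda>x y. Mf A R (Suc (m y)) x y)" by (rule moeb_ex[OF dec])
  show ?thesis unfolding moebius_def
    by (rule theI[of "is_moebius A R", OF ex]) (rule moeb_unique[OF dec _ ex])
qed

locale cox = group +
  fixes S :: "'a set"
  assumes cs: "coxeter_system G S"
begin

abbreviation "wp \<equiv> word_prod G"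
abbreviation "len \<equiv> cox_length G S"

lemma S_carr: "S \<subseteq> carrier G" and S_fin: "finite S" and one_notin: "\<one> \<notin> S"
  and S_inv2: "s \<in> S \<Longrightarrow> s \<otimes> s = \<one>" and gen_S: "generate G S = carrier G"
  and pres: "ws \<in> lists S \<Longrightarrow> wp ws = \<one> \<Longrightarrow> (ws, []) \<in> (relator_step G S \<union> (relator_step G S)\<inverse>)\<^sup>*"
  using cs unfolding coxeter_system_def by auto

lemma S_c[simp]: "s \<in> S \<Longrightarrow> s \<in> carrier G" using S_carr by auto

lemma S_inv[simp]: "s \<in> S \<Longrightarrow> inv s = s"
  using S_inv2 by (simp add: inv_equality)

lemma canc1[simp]: "x \<in> carrier G \<Longrightarrow> y \<in> carrier G \<Longrightarrow> inv x \<otimes> (x \<otimes> y) = y"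
  by (simp add: m_assoc[symmetric])
lemma canc2[simp]: "x \<in> carrier G \<Longrightarrow> y \<in> carrier G \<Longrightarrow> x \<otimes> (inv x \<otimes> y) = y"
  by (simp add: m_assoc[symmetric])
lemma canc3[simp]: "s \<in> S \<Longrightarrow> y \<in> carrier G \<Longrightarrow> s \<otimes> (s \<otimes> y) = y"
  using S_inv2 by (simp add: m_assoc[symmetric])

lemma wp_Nil[simp]: "wp [] = \<one>" by (simp add: word_prod_def)
lemma wp_Cons[simp]: "wp (a # ws) = a \<otimes> wp ws" by (simp add: word_prod_def)

lemma wp_carr[simp]: "set ws \<subseteq> carrier G \<Longrightarrow> wp ws \<in> carrier G"
  by (induction ws) auto

lemma wp_carrS[simp]: "ws \<in> lists S \<Longrightarrow> wp ws \<in> carrier G"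
  using S_carr by (intro wp_carr) auto

lemma wp_append: "set xs \<subseteq> carrier G \<Longrightarrow> set ys \<subseteq> carrier G \<Longrightarrow> wp (xs @ ys) = wp xs \<otimes> wp ys"
  by (induction xs) (auto simp: m_assoc)

lemma wp_appendS: "xs \<in> lists S \<Longrightarrow> ys \<in> lists S \<Longrightarrow> wp (xs @ ys) = wp xs \<otimes> wp ys"
  using S_carr by (intro wp_append) auto

lemma wp_appendS'[simp]: "\<forall>x\<in>set xs. x \<in> S \<Longrightarrow> \<forall>x\<in>set ys. x \<in> S \<Longrightarrow> wp (xs @ ys) = wp xs \<otimes> wp ys"
  using wp_appendS by auto

lemma wp_snoc: "xs \<in> lists S \<Longrightarrow> s \<in> S \<Longrightarrow> wp (xs @ [s]) = wp xs \<otimes> s"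
  by (simp add: wp_appendS)

lemma wp_rev: "ws \<in> lists S \<Longrightarrow> wp (rev ws) = inv (wp ws)"
  by (induction ws) (auto simp: wp_appendS inv_mult_group)

lemma gen_words: "I \<subseteq> S \<Longrightarrow> generate G I = {wp ws | ws. ws \<in> lists I}"
proof
  assume I: "I \<subseteq> S"
  show "generate G I \<subseteq> {wp ws | ws. ws \<in> lists I}"
  proof
    fix x assume "x \<in> generate G I"
    then show "x \<in> {wp ws | ws. ws \<in> lists I}"
    proof induction
      case one then show ?case by (auto intro!: exI[of _ "[]"])
    next
      case (incl h) then show ?case using I by (auto intro!: exI[of _ "[h]"])
    next
      case (inv h) then show ?case using I by (auto intro!: exI[of _ "[h]"])
    next
      case (eng h1 h2)
      then obtain w1 w2 where "w1 \<in> lists I" "w2 \<in> lists I" "h1 = wp w1" "h2 = wp w2" by auto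
      moreover have "w1 \<in> lists S" "w2 \<in> lists S" using I \<open>w1 \<in> lists I\<close> \<open>w2 \<in> lists I\<close> by auto
      ultimately show ?case using I by (auto intro!: exI[of _ "w1 @ w2"] simp: wp_appendS)
    qed
  qed
next
  assume I: "I \<subseteq> S"
  show "{wp ws | ws. ws \<in> lists I} \<subseteq> generate G I"
  proof (rule subsetI)
    fix x assume "x \<in> {wp ws | ws. ws \<in> lists I}"
    then obtain ws where ws: "ws \<in> lists I" "x = wp ws" by auto
    have "wp ws \<in> generate G I" using ws(1)
      by (induction ws) (auto intro: generate.intros)
    then show "x \<in> generate G I" using ws by simp
  qed
qed

lemma word_ex: "w \<in> carrier G \<Longrightarrow> \<exists>ws \<in> lists S. wp ws = w"
  using gen_words[of S] gen_S by auto

lemma len_le: "ws \<in> lists S \<Longrightarrow> len (wp ws) \<le> length ws"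
  unfolding cox_length_def by (rule Least_le) auto

lemma len_ex: assumes "w \<in> carrier G" shows "\<exists>ws \<in> lists S. length ws = len w \<and> wp ws = w"
proof -
  obtain ws where "ws \<in> lists S" "wp ws = w" using word_ex assms by blast
  then have "\<exists>n. \<exists>ws \<in> lists S. length ws = n \<and> wp ws = w" by blast
  then show ?thesis unfolding cox_length_def by (rule LeastI_ex)
qed

definition red :: "'a list \<Rightarrow> bool" where
  "red ws \<longleftrightarrow> ws \<in> lists S \<and> length ws = len (wp ws)"

lemma red_ex: "w \<in> carrier G \<Longrightarrow> \<exists>ws. red ws \<and> wp ws = w"
  using len_ex unfolding red_def by metis

lemma reduced_word_iff: "reduced_word G S w ws \<longleftrightarrow> red ws \<and> wp ws = w"
  unfolding reduced_word_def red_def by auto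


lemma red_S: "red ws \<Longrightarrow> ws \<in> lists S" by (simp add: red_def)

section \<open>Reflection sequences\<close>

primrec rs :: "'a list \<Rightarrow> 'a list" where
  "rs [] = []"
| "rs (a # ws) = a # map (\<lambda>t. a \<otimes> t \<otimes> a) (rs ws)"

definition cnt :: "'a \<Rightarrow> 'a list \<Rightarrow> nat" where
  "cnt t L = length (filter (\<lambda>y. y = t) L)"

definition NN :: "'a list \<Rightarrow> 'a set" where
  "NN ws = {t. odd (cnt t (rs ws))}"

lemma rs_len[simp]: "length (rs ws) = length ws"
  by (induction ws) auto

lemma rs_carr: "ws \<in> lists S \<Longrightarrow> set (rs ws) \<subseteq> carrier G"
  by (induction ws) auto

lemma rs_inv: "ws \<in> lists S \<Longrightarrow> t \<in> set (rs ws) \<Longrightarrow> t \<otimes> t = \<one>"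
proof (induction ws arbitrary: t)
  case Nil then show ?case by simp
next
  case (Cons a ws)
  show ?case
  proof (cases "t = a")
    case True then show ?thesis using Cons S_inv2 by auto
  next
    case False
    then obtain u where u: "u \<in> set (rs ws)" "t = a \<otimes> u \<otimes> a" using Cons by auto
    have uc: "u \<in> carrier G" using u rs_carr Cons by auto
    have ac: "a \<in> carrier G" using Cons by auto
    have "t \<otimes> t = a \<otimes> (u \<otimes> ((a \<otimes> a) \<otimes> u)) \<otimes> a" using u uc ac by (simp add: m_assoc)
    also have "\<dots> = a \<otimes> a" using Cons.IH[OF _ u(1)] Cons.prems S_inv2 uc ac by (simp add: m_assoc)
    also have "\<dots> = \<one>" using Cons.prems S_inv2 by auto
    finally show ?thesis .
  qed
qed

lemma rs_append: "xs \<in> lists S \<Longrightarrow> ys \<in> lists S \<Longrightarrow>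
  rs (xs @ ys) = rs xs @ map (\<lambda>t. wp xs \<otimes> t \<otimes> inv (wp xs)) (rs ys)"
proof (induction xs)
  case Nil
  have "map (\<lambda>t. t) (rs ys) = map (\<lambda>t. \<one> \<otimes> t \<otimes> inv \<one>) (rs ys)"
    using rs_carr[OF Nil(2)] by (intro map_cong) auto
  then show ?case by simp
next
  case (Cons a xs)
  have ac: "a \<in> carrier G" and xc: "wp xs \<in> carrier G" using Cons by auto
  have "map (\<lambda>t. a \<otimes> t \<otimes> a) (map (\<lambda>t. wp xs \<otimes> t \<otimes> inv (wp xs)) (rs ys))
      = map (\<lambda>t. (a \<otimes> wp xs) \<otimes> t \<otimes> inv (a \<otimes> wp xs)) (rs ys)"
    unfolding map_map o_def
  proof (rule map_cong[OF refl])
    fix t assume "t \<in> set (rs ys)"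
    then have "t \<in> carrier G" using rs_carr[OF Cons(3)] by auto
    then show "a \<otimes> (wp xs \<otimes> t \<otimes> inv (wp xs)) \<otimes> a = a \<otimes> wp xs \<otimes> t \<otimes> inv (a \<otimes> wp xs)"
      using ac xc Cons.prems by (simp add: inv_mult_group m_assoc)
  qed
  then show ?case using Cons by simp
qed

lemma rs_nth_prefix: "xs \<in> lists S \<Longrightarrow> ys \<in> lists S \<Longrightarrow> i < length xs \<Longrightarrow> rs (xs @ ys) ! i = rs xs ! i"
  by (simp add: rs_append nth_append)

lemma rs_del: "ws \<in> lists S \<Longrightarrow> j < length ws \<Longrightarrow> rs ws ! j \<otimes> wp ws = wp (take j ws @ drop (Suc j) ws)"
proof (induction ws arbitrary: j)
  case Nil then show ?case by simp
next
  case (Cons a ws)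
  have ac: "a \<in> carrier G" and wc: "wp ws \<in> carrier G" using Cons by auto
  show ?case
  proof (cases j)
    case 0
    then show ?thesis using Cons S_inv2 ac wc by (simp add: m_assoc[symmetric])
  next
    case (Suc k)
    have kc: "rs ws ! k \<in> carrier G" using rs_carr[of ws] Cons Suc by (auto)
    have "rs (a # ws) ! j \<otimes> wp (a # ws) = a \<otimes> (rs ws ! k \<otimes> ((a \<otimes> a) \<otimes> wp ws))"
      using Suc Cons kc ac wc by (simp add: m_assoc)
    also have "\<dots> = a \<otimes> wp (take k ws @ drop (Suc k) ws)"
      using Cons Suc S_inv2 wc kc by simp
    finally show ?thesis using Suc by simp
  qed
qed

lemma cnt_append[simp]: "cnt t (xs @ ys) = cnt t xs + cnt t ys"
  by (simp add: cnt_def)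

lemma cnt_rev[simp]: "cnt t (rev xs) = cnt t xs"
  by (simp add: cnt_def rev_filter[symmetric])

lemma cnt_conj_even:
  assumes "\<forall>u. even (cnt u L)" "set L \<subseteq> carrier G" "X \<in> carrier G"
  shows "even (cnt t (map (\<lambda>y. X \<otimes> y \<otimes> inv X) L))"
proof (cases "t \<in> carrier G")
  case True
  have "filter (\<lambda>y. y = t) (map (\<lambda>y. X \<otimes> y \<otimes> inv X) L)
     = map (\<lambda>y. X \<otimes> y \<otimes> inv X) (filter (\<lambda>y. X \<otimes> y \<otimes> inv X = t) L)"
    by (simp add: filter_map o_def)
  moreover have "filter (\<lambda>y. X \<otimes> y \<otimes> inv X = t) L = filter (\<lambda>y. y = inv X \<otimes> t \<otimes> X) L"
  proof (rule filter_cong)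
    fix y assume "y \<in> set L"
    then have yc: "y \<in> carrier G" using assms by auto
    show "(X \<otimes> y \<otimes> inv X = t) = (y = inv X \<otimes> t \<otimes> X)"
    proof
      assume "X \<otimes> y \<otimes> inv X = t"
      then have "inv X \<otimes> (X \<otimes> y \<otimes> inv X) \<otimes> X = inv X \<otimes> t \<otimes> X" by simp
      then show "y = inv X \<otimes> t \<otimes> X" using yc assms(3) by (simp add: m_assoc)
    next
      assume "y = inv X \<otimes> t \<otimes> X"
      then show "X \<otimes> y \<otimes> inv X = t" using True assms(3) by (simp add: m_assoc)
    qed
  qed simp
  ultimately show ?thesis using assms(1) by (simp add: cnt_def)
next
  case False
  have "filter (\<lambda>y. y = t) (map (\<lambda>y. X \<otimes> y \<otimes> inv X) L) = []"
    using assms False by (auto simp: filter_empty_conv)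
  then show ?thesis by (simp add: cnt_def)
qed


lemma alt_lists: "s \<in> S \<Longrightarrow> t \<in> S \<Longrightarrow> concat (replicate m [s, t]) \<in> lists S"
  by (induction m) auto

lemma alt_wp: "s \<in> S \<Longrightarrow> t \<in> S \<Longrightarrow> wp (concat (replicate m [s, t])) = (s \<otimes> t) [^] m"
proof (induction m)
  case 0 then show ?case by simp
next
  case (Suc m)
  have "wp (concat (replicate (Suc m) [s, t])) = wp ([s,t] @ concat (replicate m [s, t]))" by simp
  also have "\<dots> = s \<otimes> t \<otimes> (s \<otimes> t) [^] m"
    using Suc alt_lists[OF Suc.prems, of m] by (simp only: wp_appendS) (simp add: m_assoc)
  also have "\<dots> = (s \<otimes> t) [^] Suc m" using Suc.prems by (simp add: nat_pow_Suc2[symmetric] del: nat_pow_Suc)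
  finally show ?case .
qed

lemma alt_rs: assumes st: "s \<in> S" "t \<in> S"
  shows "rs (concat (replicate m [s, t])) = map (\<lambda>j. (s \<otimes> t) [^] j \<otimes> s) [0..<2*m]"
proof (induction m)
  case 0 then show ?case by simp
next
  case (Suc m)
  let ?g = "\<lambda>j::nat. (s \<otimes> t) [^] j \<otimes> s"
  have sc: "s \<in> carrier G" and tc: "t \<in> carrier G" using st by auto
  have "rs (concat (replicate (Suc m) [s, t])) = rs ([s,t] @ concat (replicate m [s, t]))" by simp
  also have "\<dots> = rs [s,t] @ map (\<lambda>x. (s \<otimes> t) \<otimes> x \<otimes> inv (s \<otimes> t)) (map ?g [0..<2*m])"
    using rs_append[of "[s,t]" "concat (replicate m [s, t])"] alt_lists[OF st, of m] st Suc
    by (simp add: m_assoc)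
  also have "map (\<lambda>x. (s \<otimes> t) \<otimes> x \<otimes> inv (s \<otimes> t)) (map ?g [0..<2*m]) = map (\<lambda>j. ?g (j + 2)) [0..<2*m]"
    unfolding map_map o_def
  proof (rule map_cong[OF refl])
    fix j :: nat
    have pc: "(s \<otimes> t) [^] j \<in> carrier G" using sc tc by (intro nat_pow_closed m_closed)
    have comm: "s \<otimes> (t \<otimes> (s \<otimes> t) [^] j) = (s \<otimes> t) [^] j \<otimes> (s \<otimes> t)"
      using nat_pow_Suc2[of "s \<otimes> t" j] sc tc by (simp add: m_assoc)
    have "(s \<otimes> t) \<otimes> ?g j \<otimes> inv (s \<otimes> t) = (s \<otimes> (t \<otimes> (s \<otimes> t) [^] j)) \<otimes> (s \<otimes> (t \<otimes> s))"
      using sc tc st by (simp add: inv_mult_group m_assoc)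
    also have "\<dots> = ?g (j + 2)" unfolding comm using sc tc by (simp add: m_assoc)
    finally show "(s \<otimes> t) \<otimes> ?g j \<otimes> inv (s \<otimes> t) = ?g (j + 2)" .
  qed
  also have "rs [s,t] = [?g 0, ?g 1]" using sc tc st by (simp add: m_assoc One_nat_def)
  also have "map (\<lambda>j. ?g (j + 2)) [0..<2*m] = map ?g [2..<2*m+2]"
    by (subst map_add_upt[symmetric]) (simp add: o_def)
  also have "[?g 0, ?g 1] @ map ?g [2..<2*m+2] = map ?g [0..<2 * Suc m]"
  proof -
    have "[0..<2 * Suc m] = [0..<2] @ [2..<2*m+2]" using upt_add_eq_append[of 0 2 "2*m"] by (simp add: add.commute)
    then show ?thesis by (simp add: upt_rec)
  qed
  finally show ?case .
qed

lemma alt_even: assumes st: "s \<in> S" "t \<in> S" and m: "(s \<otimes> t) [^] m = \<one>"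
  shows "even (cnt u (rs (concat (replicate m [s, t]))))"
proof -
  let ?g = "\<lambda>j::nat. (s \<otimes> t) [^] j \<otimes> s"
  have sc: "s \<in> carrier G" and tc: "t \<in> carrier G" using st by auto
  have "[0..<2*m] = [0..<m] @ [m..<m+m]" by (simp add: upt_add_eq_append[symmetric] mult_2)
  moreover have "map ?g [m..<m+m] = map ?g [0..<m]"
  proof -
    have "map ?g [m..<m+m] = map (\<lambda>i. ?g (i + m)) [0..<m]"
      by (subst map_add_upt[symmetric]) (simp add: o_def)
    also have "\<dots> = map ?g [0..<m]"
    proof (rule map_cong[OF refl])
      fix i :: nat show "?g (i + m) = ?g i" using sc tc m by (simp add: nat_pow_mult[symmetric])
    qed
    finally show ?thesis .
  qed
  ultimately have "map ?g [0..<2*m] = map ?g [0..<m] @ map ?g [0..<m]" by simp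
  then show ?thesis using alt_rs[OF st, of m] by simp
qed

lemma relator_props: assumes "r \<in> coxeter_relators G S"
  shows "r \<in> lists S \<and> wp r = \<one> \<and> (\<forall>u. even (cnt u (rs r)))"
  using assms unfolding coxeter_relators_def
proof (elim UnE CollectE exE conjE)
  fix s assume r: "r = [s, s]" and s: "s \<in> S"
  have "s \<otimes> s \<otimes> s = s" using s S_inv2 by simp
  then have "rs r = [s, s]" using r by simp
  then show ?thesis using r s S_inv2 by (simp add: cnt_def)
next
  fix s t m assume r: "r = concat (replicate m [s, t])" and st: "s \<in> S" "t \<in> S"
    and m: "(s \<otimes> t) [^] m = \<one>"
  show ?thesis using r alt_lists[OF st] alt_wp[OF st] alt_even[OF st m] m by simp
qed


section \<open>Invariance of the reflection parity\<close>

lemma cj_one: "set L \<subseteq> carrier G \<Longrightarrow> map (\<lambda>t. \<one> \<otimes> t \<otimes> inv \<one>) L = L"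
  by (induction L) auto

lemma step_inv: assumes xs: "xs \<in> lists S" and ys: "ys \<in> lists S" and r: "r \<in> coxeter_relators G S"
  shows "NN (xs @ r @ ys) = NN (xs @ ys)"
proof -
  have rp: "r \<in> lists S" "wp r = \<one>" "\<forall>u. even (cnt u (rs r))" using relator_props[OF r] by auto
  let ?c = "\<lambda>t. wp xs \<otimes> t \<otimes> inv (wp xs)"
  have "rs (r @ ys) = rs r @ rs ys"
    using rs_append[OF rp(1) ys] rp(2) cj_one[OF rs_carr[OF ys]] by simp
  then have "rs (xs @ r @ ys) = rs xs @ map ?c (rs r) @ map ?c (rs ys)"
    using rs_append[OF xs, of "r @ ys"] rp ys by simp
  moreover have "rs (xs @ ys) = rs xs @ map ?c (rs ys)" using rs_append[OF xs ys] .
  moreover have "\<And>u. even (cnt u (map ?c (rs r)))"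
    using cnt_conj_even[OF rp(3) rs_carr[OF rp(1)]] xs by simp
  ultimately show ?thesis unfolding NN_def by auto
qed

lemma chain_inv:
  assumes "(a, b) \<in> (relator_step G S \<union> (relator_step G S)\<inverse>)\<^sup>*" "a \<in> lists S"
  shows "b \<in> lists S \<and> NN b = NN a"
  using assms(1)
proof (induction rule: rtrancl_induct)
  case base then show ?case using assms(2) by simp
next
  case (step b c)
  from step(2) show ?case
  proof
    assume "(b, c) \<in> relator_step G S"
    then obtain xs r ys where "b = xs @ r @ ys" "c = xs @ ys" "r \<in> coxeter_relators G S"
      unfolding relator_step_def by auto
    moreover have "xs \<in> lists S" "ys \<in> lists S" using step(3) calculation by auto
    ultimately show ?thesis using step(3) step_inv[of xs ys r] by auto
  next
    assume "(b, c) \<in> (relator_step G S)\<inverse>"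
    then obtain xs r ys where *: "c = xs @ r @ ys" "b = xs @ ys" "r \<in> coxeter_relators G S"
      unfolding relator_step_def by auto
    then have "r \<in> lists S" using relator_props by auto
    moreover have "xs \<in> lists S" "ys \<in> lists S" using step(3) * by auto
    ultimately show ?thesis using * step(3) step_inv[of xs ys r] by auto
  qed
qed

lemma NN_one: "ws \<in> lists S \<Longrightarrow> wp ws = \<one> \<Longrightarrow> NN ws = {}"
  using chain_inv[OF pres] by (auto simp: NN_def cnt_def)

lemma rs_rev: "ws \<in> lists S \<Longrightarrow> map (\<lambda>t. wp ws \<otimes> t \<otimes> inv (wp ws)) (rs (rev ws)) = rev (rs ws)"
proof (induction ws)
  case Nil then show ?case by simp
next
  case (Cons a ws)
  have ac: "a \<in> carrier G" and W: "wp ws \<in> carrier G" and ws: "ws \<in> lists S" "a \<in> S" using Cons by auto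
  have rr: "rev ws \<in> lists S" using ws by auto
  have "rs (rev (a # ws)) = rs (rev ws) @ [inv (wp ws) \<otimes> a \<otimes> wp ws]"
    using rs_append[OF rr, of "[a]"] ws wp_rev[OF ws(1)] W by simp
  moreover have "map (\<lambda>t. wp (a # ws) \<otimes> t \<otimes> inv (wp (a # ws))) (rs (rev ws))
      = map (\<lambda>t. a \<otimes> t \<otimes> a) (map (\<lambda>t. wp ws \<otimes> t \<otimes> inv (wp ws)) (rs (rev ws)))"
    unfolding map_map o_def
  proof (rule map_cong[OF refl])
    fix t assume "t \<in> set (rs (rev ws))"
    then have "t \<in> carrier G" using rs_carr[OF rr] by auto
    then show "wp (a # ws) \<otimes> t \<otimes> inv (wp (a # ws)) = a \<otimes> (wp ws \<otimes> t \<otimes> inv (wp ws)) \<otimes> a"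
      using ac W ws by (simp add: m_assoc inv_mult_group)
  qed
  moreover have "wp (a # ws) \<otimes> (inv (wp ws) \<otimes> a \<otimes> wp ws) \<otimes> inv (wp (a # ws)) = a"
    using ac W ws by (simp add: m_assoc inv_mult_group)
  ultimately show ?case using Cons.IH[OF ws(1)] by (simp add: rev_map)
qed

lemma NN_wd: assumes "ws1 \<in> lists S" "ws2 \<in> lists S" "wp ws1 = wp ws2"
  shows "NN ws1 = NN ws2"
proof -
  have r2: "rev ws2 \<in> lists S" using assms by auto
  have "wp (ws1 @ rev ws2) = \<one>" using assms wp_rev[OF assms(2)] wp_appendS[OF assms(1) r2] by simp
  then have e: "NN (ws1 @ rev ws2) = {}" using NN_one assms r2 by auto
  have "rs (ws1 @ rev ws2) = rs ws1 @ rev (rs ws2)"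
    using rs_append[OF assms(1) r2] rs_rev[OF assms(2)] assms(3) by simp
  then have "\<And>t. even (cnt t (rs ws1) + cnt t (rs ws2))" using e unfolding NN_def by auto
  then show ?thesis unfolding NN_def by auto
qed

lemma NN_sub: "NN ws \<subseteq> set (rs ws)"
proof
  fix t assume "t \<in> NN ws"
  then have "cnt t (rs ws) \<noteq> 0" unfolding NN_def by (auto intro: odd_pos)
  then show "t \<in> set (rs ws)" unfolding cnt_def by (auto simp: filter_empty_conv)
qed

lemma NN_fin: "finite (NN ws)"
  using NN_sub finite_subset by blast

lemma del_lists: "ws \<in> lists S \<Longrightarrow> take i ws @ drop (Suc i) ws \<in> lists S"
  by (auto dest: in_set_takeD in_set_dropD)

lemma cnt_distinct: "distinct L \<Longrightarrow> cnt t L = (if t \<in> set L then 1 else 0)"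
  by (induction L) (auto simp: cnt_def filter_empty_conv)

lemma red_distinct: assumes "red ws" shows "distinct (rs ws)"
proof (rule ccontr)
  assume "\<not> distinct (rs ws)"
  then obtain i0 j0 where ij0: "i0 < length ws" "j0 < length ws" "i0 \<noteq> j0" "rs ws ! i0 = rs ws ! j0"
    unfolding distinct_conv_nth by auto
  define i where "i = min i0 j0"
  define j where "j = max i0 j0"
  have ij: "i < j" "j < length ws" "rs ws ! i = rs ws ! j"
    using ij0 unfolding i_def j_def by (auto simp: min_def max_def)
  have ws: "ws \<in> lists S" using assms red_S by auto
  let ?d = "take j ws @ drop (Suc j) ws"
  have dS: "?d \<in> lists S" using ws by (rule del_lists)
  have tj: "take j ws \<in> lists S" "drop j ws \<in> lists S" using ws by (auto dest: in_set_takeD in_set_dropD)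
  have "rs ?d ! i = rs (take j ws) ! i"
    using rs_nth_prefix[of "take j ws" "drop (Suc j) ws" i] tj ij ws by (auto dest: in_set_dropD)
  also have "\<dots> = rs ws ! i"
    using rs_nth_prefix[of "take j ws" "drop j ws" i] tj ij by simp
  finally have di: "rs ?d ! i = rs ws ! i" .
  have tc: "rs ws ! i \<in> set (rs ws)" using ij by simp
  have tcarr: "rs ws ! i \<in> carrier G" using tc rs_carr[OF ws] by auto
  have li: "i < length ?d" using ij by simp
  have "wp (take i ?d @ drop (Suc i) ?d) = rs ?d ! i \<otimes> wp ?d" using rs_del[OF dS li] by simp
  also have "\<dots> = rs ws ! i \<otimes> (rs ws ! j \<otimes> wp ws)" using di rs_del[OF ws ij(2)] by simp
  also have "\<dots> = wp ws" using ij(3) rs_inv[OF ws tc] tcarr ws by (simp add: m_assoc[symmetric])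
  finally have "wp (take i ?d @ drop (Suc i) ?d) = wp ws" .
  moreover have "take i ?d @ drop (Suc i) ?d \<in> lists S" using dS by (rule del_lists)
  ultimately have "len (wp ws) \<le> length (take i ?d @ drop (Suc i) ?d)" using len_le by metis
  moreover have "length (take i ?d @ drop (Suc i) ?d) = length ws - 2" using ij by simp
  ultimately show False using assms ij unfolding red_def by linarith
qed

lemma NN_red: assumes "red ws" shows "NN ws = set (rs ws)" "card (NN ws) = len (wp ws)"
proof -
  show "NN ws = set (rs ws)" using cnt_distinct[OF red_distinct[OF assms]] unfolding NN_def by auto
  then show "card (NN ws) = len (wp ws)"
    using distinct_card[OF red_distinct[OF assms]] assms unfolding red_def by simp
qed

lemma NN_snoc: assumes "ws \<in> lists S" "s \<in> S"
  shows "NN (ws @ [s]) = (if wp ws \<otimes> s \<otimes> inv (wp ws) \<in> NN ws then NN ws - {wp ws \<otimes> s \<otimes> inv (wp ws)}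
     else insert (wp ws \<otimes> s \<otimes> inv (wp ws)) (NN ws))"
proof -
  have "rs (ws @ [s]) = rs ws @ [wp ws \<otimes> s \<otimes> inv (wp ws)]" using rs_append[of ws "[s]"] assms by simp
  then show ?thesis unfolding NN_def by (auto simp: cnt_def)
qed

lemma len_one[simp]: "len \<one> = 0"
  using len_le[of "[]"] by simp

lemma len_zero: assumes "w \<in> carrier G" "len w = 0" shows "w = \<one>"
  using len_ex[OF assms(1)] assms(2) by auto

lemma len_step:
  assumes ws: "ws \<in> lists S" and s: "s \<in> S"
  shows "wp ws \<otimes> s \<otimes> inv (wp ws) \<in> NN ws \<Longrightarrow> len (wp ws \<otimes> s) + 1 = len (wp ws)"
    and "wp ws \<otimes> s \<otimes> inv (wp ws) \<notin> NN ws \<Longrightarrow> len (wp ws \<otimes> s) = len (wp ws) + 1"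
proof -
  let ?w = "wp ws" let ?t = "wp ws \<otimes> s \<otimes> inv (wp ws)"
  obtain rw where rw: "red rw" "wp rw = ?w" using red_ex[OF wp_carrS[OF ws]] by blast
  obtain rv where rv: "red rv" "wp rv = ?w \<otimes> s" using red_ex[OF m_closed[OF wp_carrS[OF ws] S_c[OF s]]] by blast
  have rwS: "rw \<in> lists S" and rvS: "rv \<in> lists S" using rw rv red_S by auto
  have e1: "NN ws = NN rw" using NN_wd[OF ws rwS] rw by simp
  have e2: "NN rv = NN (rw @ [s])" using NN_wd[OF rvS, of "rw @ [s]"] rwS s rv rw wp_snoc by auto
  have c1: "card (NN rw) = len ?w" using NN_red[OF rw(1)] rw by simp
  have c2: "card (NN rv) = len (?w \<otimes> s)" using NN_red[OF rv(1)] rv by simp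
  have sn: "NN (rw @ [s]) = (if ?t \<in> NN rw then NN rw - {?t} else insert ?t (NN rw))"
    using NN_snoc[OF rwS s] rw by simp
  show "?t \<in> NN ws \<Longrightarrow> len (?w \<otimes> s) + 1 = len ?w"
  proof -
    assume "?t \<in> NN ws"
    then have "?t \<in> NN rw" using e1 by simp
    then have "card (NN rv) = card (NN rw) - 1" using e2 sn NN_fin by simp
    moreover have "card (NN rw) > 0" using \<open>?t \<in> NN rw\<close> NN_fin card_gt_0_iff by blast
    ultimately show ?thesis using c1 c2 by linarith
  qed
  show "?t \<notin> NN ws \<Longrightarrow> len (?w \<otimes> s) = len ?w + 1"
  proof -
    assume "?t \<notin> NN ws"
    then have "?t \<notin> NN rw" using e1 by simp
    then have "card (NN rv) = card (NN rw) + 1" using e2 sn NN_fin by simp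
    then show ?thesis using c1 c2 by linarith
  qed
qed

lemma len_pm: assumes "w \<in> carrier G" "s \<in> S"
  shows "len (w \<otimes> s) = len w + 1 \<or> len (w \<otimes> s) + 1 = len w"
  using word_ex[OF assms(1)] len_step[OF _ assms(2)] by metis

lemma exchange:
  assumes ws: "ws \<in> lists S" and s: "s \<in> S" and lt: "len (wp ws \<otimes> s) < len (wp ws)"
  shows "\<exists>j < length ws. wp ws \<otimes> s = wp (take j ws @ drop (Suc j) ws)"
proof -
  let ?w = "wp ws" let ?t = "wp ws \<otimes> s \<otimes> inv (wp ws)"
  have "?t \<in> NN ws" using len_step(2)[OF ws s] lt by force
  then have "?t \<in> set (rs ws)" using NN_sub by auto
  then obtain j where j: "j < length ws" "rs ws ! j = ?t" by (auto simp: in_set_conv_nth)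
  have "?t \<otimes> ?w = ?w \<otimes> s" using ws s by (simp add: m_assoc)
  then show ?thesis using rs_del[OF ws j(1)] j by auto
qed


lemma len_S: "s \<in> S \<Longrightarrow> len s = 1"
proof -
  assume s: "s \<in> S"
  have "len s \<le> 1" using len_le[of "[s]"] s by simp
  moreover have "len s \<noteq> 0" using len_zero[of s] s one_notin by auto
  ultimately show ?thesis by simp
qed

lemma red_snoc: assumes "red (ws @ [s])"
  shows "red ws" "len (wp ws \<otimes> s) = len (wp ws) + 1"
proof -
  have ws: "ws \<in> lists S" and s: "s \<in> S" using red_S[OF assms] by auto
  have l: "len (wp ws \<otimes> s) = length ws + 1" using assms wp_snoc[OF ws s] unfolding red_def by simp
  have "len (wp ws) \<le> length ws" using len_le[OF ws] .
  moreover have "len (wp ws \<otimes> s) \<le> len (wp ws) + 1" using len_pm[OF wp_carrS[OF ws] s] by auto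
  ultimately show "red ws" "len (wp ws \<otimes> s) = len (wp ws) + 1" using l ws unfolding red_def by auto
qed

lemma lists_mono_S: "I \<subseteq> S \<Longrightarrow> ws \<in> lists I \<Longrightarrow> ws \<in> lists S"
  by auto

lemma del_listsI: "ws \<in> lists I \<Longrightarrow> take i ws @ drop (Suc i) ws \<in> lists I"
  by (auto dest: in_set_takeD in_set_dropD)

lemma WI_sub: "I \<subseteq> S \<Longrightarrow> subgroup (generate G I) G"
  using S_carr by (intro generate_is_subgroup) auto

lemma WI_carr: "I \<subseteq> S \<Longrightarrow> x \<in> generate G I \<Longrightarrow> x \<in> carrier G"
  by (rule subgroup.mem_carrier[OF WI_sub])

lemma wp_WI: assumes "I \<subseteq> S" "ws \<in> lists I" shows "wp ws \<in> generate G I"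
  using gen_words[OF assms(1)] assms(2) by blast

lemma WI_red: assumes I: "I \<subseteq> S" and w: "w \<in> generate G I"
  shows "\<exists>ws \<in> lists I. red ws \<and> wp ws = w"
proof -
  obtain ws where ws: "ws \<in> lists I" "wp ws = w" using w gen_words[OF I] by auto
  have "\<exists>us \<in> lists I. red us \<and> wp us = wp ws" using ws(1)
  proof (induction ws rule: rev_induct)
    case Nil then show ?case by (auto simp: red_def intro!: bexI[of _ "[]"])
  next
    case (snoc a vs)
    have vs: "vs \<in> lists I" "a \<in> I" using snoc by auto
    then have vsS: "vs \<in> lists S" "a \<in> S" using I by auto
    obtain us where us: "us \<in> lists I" "red us" "wp us = wp vs" using snoc vs by auto
    have usS: "us \<in> lists S" using us I by auto
    have wva: "wp (vs @ [a]) = wp vs \<otimes> a" using wp_snoc vsS by simp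
    consider "len (wp vs \<otimes> a) = len (wp vs) + 1" | "len (wp vs \<otimes> a) + 1 = len (wp vs)"
      using len_pm[OF wp_carrS[OF vsS(1)] vsS(2)] by auto
    then show ?case
    proof cases
      case 1
      have "red (us @ [a])" using 1 us usS vsS wp_snoc[OF usS vsS(2)] unfolding red_def by auto
      moreover have "wp (us @ [a]) = wp (vs @ [a])" using wp_snoc[OF usS vsS(2)] wva us by simp
      ultimately show ?thesis using us vs by (intro bexI[of _ "us @ [a]"]) auto
    next
      case 2
      then obtain j where j: "j < length us" "wp us \<otimes> a = wp (take j us @ drop (Suc j) us)"
        using exchange[OF usS vsS(2)] us by auto
      have "red (take j us @ drop (Suc j) us)"
        using j 2 us del_lists[OF usS] unfolding red_def by (auto simp: min_def)
      then show ?thesis using j del_listsI[OF us(1)] wva us by (intro bexI[of _ "take j us @ drop (Suc j) us"]) auto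
    qed
  qed
  then show ?thesis using ws by simp
qed

lemma S_in_WI: assumes I: "I \<subseteq> S" and s: "s \<in> S" "s \<in> generate G I" shows "s \<in> I"
proof -
  obtain us where us: "us \<in> lists I" "red us" "wp us = s" using WI_red[OF I s(2)] by auto
  then have "length us = 1" using len_S[OF s(1)] unfolding red_def by simp
  then obtain a where "us = [a]" by (cases us) auto
  then show ?thesis using us I by auto
qed

lemma red_in_WI: assumes I: "I \<subseteq> S" shows "red ws \<Longrightarrow> wp ws \<in> generate G I \<Longrightarrow> ws \<in> lists I"
proof (induction ws rule: rev_induct)
  case Nil then show ?case by simp
next
  case (snoc s vs)
  have vs: "vs \<in> lists S" "s \<in> S" using red_S[OF snoc(2)] by auto
  let ?w = "wp (vs @ [s])"
  have wv: "?w = wp vs \<otimes> s" using wp_snoc vs by simp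
  have wc: "?w \<in> carrier G" using vs by simp
  have rv: "red vs" and lv: "len (wp vs \<otimes> s) = len (wp vs) + 1" using red_snoc[OF snoc(2)] by auto
  have ws: "?w \<otimes> s = wp vs" using wv vs S_inv2 by (simp add: m_assoc)
  obtain us where us: "us \<in> lists I" "red us" "wp us = ?w" using WI_red[OF I snoc(3)] by auto
  have usS: "us \<in> lists S" using us I by auto
  have "len (wp us \<otimes> s) < len (wp us)" using us ws lv wv by simp
  then obtain j where j: "wp us \<otimes> s = wp (take j us @ drop (Suc j) us)"
    using exchange[OF usS vs(2)] by auto
  have inI: "wp vs \<in> generate G I" using j ws us wp_WI[OF I del_listsI[OF us(1)]] by simp
  have "inv ?w \<otimes> (?w \<otimes> s) = s" using wc vs(2) by simp
  then have e: "inv ?w \<otimes> wp vs = s" using ws by simp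
  have "inv ?w \<otimes> wp vs \<in> generate G I"
    using inI snoc(3) subgroup.m_closed[OF WI_sub[OF I]] subgroup.m_inv_closed[OF WI_sub[OF I]] by blast
  then have "s \<in> generate G I" using e by simp
  then have "s \<in> I" using S_in_WI[OF I vs(2)] by simp
  then show ?case using snoc.IH[OF rv inI] by simp
qed

abbreviation "supp \<equiv> cox_support G S"

lemma supp_def': "supp w = \<Union> {set ws | ws. red ws \<and> wp ws = w}"
  unfolding cox_support_def reduced_word_iff by simp

lemma supp_S: "supp w \<subseteq> S"
  unfolding supp_def' using red_S by fastforce

lemma supp_fin: "finite (supp w)"
  using supp_S S_fin finite_subset by blast

lemma in_supp: "red ws \<Longrightarrow> set ws \<subseteq> supp (wp ws)"
  unfolding supp_def' by blast

lemma supp_WI: assumes "I \<subseteq> S" "w \<in> generate G I" shows "supp w \<subseteq> I"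
  unfolding supp_def' using red_in_WI[OF assms(1)] assms(2) by blast

lemma in_Wsupp: assumes "w \<in> carrier G" shows "w \<in> generate G (supp w)"
proof -
  obtain ws where ws: "red ws" "wp ws = w" using red_ex[OF assms] by auto
  then have "ws \<in> lists (supp w)" using in_supp[OF ws(1)] by auto
  then show ?thesis using wp_WI[OF supp_S] ws by auto
qed

lemma supp_one: "supp \<one> = {}"
  unfolding supp_def' red_def by auto

abbreviation "des \<equiv> descents G S"

lemma des_S: "des w \<subseteq> S" unfolding descents_def by auto

lemma des_supp: assumes "w \<in> carrier G" shows "des w \<subseteq> supp w"
proof
  fix s assume "s \<in> des w"
  then have s: "s \<in> S" "len (w \<otimes> s) < len w" unfolding descents_def by auto
  then have l: "len (w \<otimes> s) + 1 = len w" using len_pm[OF assms s(1)] by auto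
  obtain vs where vs: "red vs" "wp vs = w \<otimes> s" using red_ex[OF m_closed[OF assms S_c[OF s(1)]]] by blast
  have vsS: "vs \<in> lists S" using vs red_S by auto
  have "wp (vs @ [s]) = w" using wp_snoc[OF vsS s(1)] vs assms s S_inv2 by (simp add: m_assoc)
  moreover have "red (vs @ [s])" using vs l vsS s calculation unfolding red_def by auto
  ultimately show "s \<in> supp w" using in_supp by fastforce
qed

lemma des_nonempty: assumes "w \<in> carrier G" "w \<noteq> \<one>" shows "des w \<noteq> {}"
proof -
  obtain ws where ws: "red ws" "wp ws = w" using red_ex[OF assms(1)] by auto
  have "ws \<noteq> []" using ws assms by auto
  then obtain vs s where vs: "ws = vs @ [s]" using rev_exhaust by blast
  have S: "vs \<in> lists S" "s \<in> S" using red_S[OF ws(1)] vs by auto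
  have "len (wp vs \<otimes> s) = len (wp vs) + 1" using red_snoc ws vs by auto
  moreover have "w \<otimes> s = wp vs"
  proof -
    have "w = wp vs \<otimes> s" using ws vs wp_snoc[OF S] by simp
    then show ?thesis using S S_inv2 by (simp add: m_assoc)
  qed
  ultimately have "s \<in> des w" using S ws vs wp_snoc[OF S] unfolding descents_def by auto
  then show ?thesis by auto
qed


section \<open>Parabolic decomposition\<close>

lemma lcanc: assumes "x \<in> carrier G" "y \<in> carrier G" "z \<in> carrier G" "x \<otimes> y = x \<otimes> z" shows "y = z"
proof -
  have "inv x \<otimes> (x \<otimes> y) = inv x \<otimes> (x \<otimes> z)" using assms(4) by simp
  then show ?thesis using assms(1-3) by simp
qed

lemma min_add:
  assumes I: "I \<subseteq> S" and u: "u \<in> carrier G" and minu: "\<forall>x\<in>generate G I. len u \<le> len (u \<otimes> x)"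
  shows "xs \<in> lists I \<Longrightarrow> red xs \<Longrightarrow> len (u \<otimes> wp xs) = len u + length xs"
proof (induction xs rule: rev_induct)
  case Nil then show ?case using u by simp
next
  case (snoc a xs)
  have xsI: "xs \<in> lists I" "a \<in> I" using snoc(2) by auto
  then have xsS: "xs \<in> lists S" "a \<in> S" using I by auto
  have rx: "red xs" and lx: "len (wp xs \<otimes> a) = len (wp xs) + 1" using red_snoc[OF snoc(3)] by auto
  have IH: "len (u \<otimes> wp xs) = len u + length xs" using snoc.IH xsI rx by simp
  obtain ru where ru: "red ru" "wp ru = u" using red_ex[OF u] by auto
  have ruS: "ru \<in> lists S" using red_S[OF ru(1)] .
  let ?x = "wp xs"
  have xc: "?x \<in> carrier G" using xsS by simp
  have ac: "a \<in> carrier G" using xsS by simp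
  have wpa: "wp (xs @ [a]) = ?x \<otimes> a" using wp_snoc xsS by simp
  have weq: "wp (ru @ xs) = u \<otimes> ?x" using wp_appendS[OF ruS xsS(1)] ru by simp
  have lxs: "length xs = len ?x" using rx unfolding red_def by simp
  consider "len (u \<otimes> ?x \<otimes> a) = len (u \<otimes> ?x) + 1" | "len (u \<otimes> ?x \<otimes> a) + 1 = len (u \<otimes> ?x)"
    using len_pm[OF m_closed[OF u xc] xsS(2)] by auto
  then show ?case
  proof cases
    case 1
    then show ?thesis using IH wpa u xc ac by (simp add: m_assoc)
  next
    case 2
    have rxsS: "ru @ xs \<in> lists S" using ruS xsS by simp
    have "len (wp (ru @ xs) \<otimes> a) < len (wp (ru @ xs))" using 2 weq by simp
    then obtain j where j: "j < length (ru @ xs)" "wp (ru @ xs) \<otimes> a = wp (take j (ru @ xs) @ drop (Suc j) (ru @ xs))"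
      using exchange[OF rxsS xsS(2)] by blast
    show ?thesis
    proof (cases "j < length ru")
      case True
      let ?d = "take j ru @ drop (Suc j) ru"
      have dS: "?d \<in> lists S" using del_lists[OF ruS] .
      have "take j (ru @ xs) @ drop (Suc j) (ru @ xs) = ?d @ xs" using True by simp
      then have e: "u \<otimes> ?x \<otimes> a = wp ?d \<otimes> ?x" using j weq wp_appendS[OF dS xsS(1)] by simp
      have dc: "wp ?d \<in> carrier G" using dS by simp
      have "wp ?d = (wp ?d \<otimes> ?x) \<otimes> inv ?x" using dc xc by (simp add: m_assoc)
      also have "\<dots> = (u \<otimes> ?x \<otimes> a) \<otimes> inv ?x" using e by simp
      also have "\<dots> = u \<otimes> (?x \<otimes> a \<otimes> inv ?x)" using u xc ac by (simp add: m_assoc)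
      finally have e2: "wp ?d = u \<otimes> (?x \<otimes> a \<otimes> inv ?x)" .
      have "?x \<otimes> a \<otimes> inv ?x \<in> generate G I"
        using wp_WI[OF I xsI(1)] generate.incl[OF xsI(2)] subgroup.m_closed[OF WI_sub[OF I]]
          subgroup.m_inv_closed[OF WI_sub[OF I]] by blast
      then have "len u \<le> len (wp ?d)" using minu e2 by simp
      moreover have "len (wp ?d) \<le> length ru - 1" using len_le[OF dS] True by simp
      moreover have "length ru = len u" using ru unfolding red_def by simp
      ultimately show ?thesis using True by linarith
    next
      case False
      define k where "k = j - length ru"
      have k: "k < length xs" using j False unfolding k_def by simp
      let ?d = "take k xs @ drop (Suc k) xs"
      have dS: "?d \<in> lists S" using del_lists[OF xsS(1)] .
      have "take j (ru @ xs) @ drop (Suc j) (ru @ xs) = ru @ ?d" using False unfolding k_def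
        by (simp add: Suc_diff_le)
      then have "u \<otimes> (?x \<otimes> a) = u \<otimes> wp ?d" using j weq wp_appendS[OF ruS dS] ru u xc ac by (simp add: m_assoc)
      then have "?x \<otimes> a = wp ?d" using lcanc u xc ac dS by simp
      then have "len (?x \<otimes> a) \<le> length xs - 1" using len_le[OF dS] k by simp
      then show ?thesis using lx lxs by linarith
    qed
  qed
qed

lemma pc_main:
  assumes I: "I \<subseteq> S" and w: "w \<in> carrier G"
  shows "\<exists>u. u \<in> min_reps G S I \<and> inv u \<otimes> w \<in> generate G I \<and> parabolic_comp G S I w = inv u \<otimes> w
     \<and> (\<forall>x\<in>generate G I. len (u \<otimes> x) = len u + len x)"
proof -
  let ?P = "\<lambda>u. \<exists>x\<in>generate G I. u = w \<otimes> x"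
  have Pw: "?P w" using w generate.one[of G I] by (intro bexI[of _ "\<one>"]) auto
  obtain u where Pu: "?P u" and minu': "\<forall>y. ?P y \<longrightarrow> len u \<le> len y"
    using ex_has_least_nat[of ?P w len, OF Pw] by blast
  obtain x0 where x0: "x0 \<in> generate G I" "u = w \<otimes> x0" using Pu by blast
  have x0c: "x0 \<in> carrier G" using WI_carr[OF I x0(1)] .
  have uc: "u \<in> carrier G" using x0 x0c w by simp
  have minu: "\<forall>x\<in>generate G I. len u \<le> len (u \<otimes> x)"
  proof
    fix x assume x: "x \<in> generate G I"
    have "u \<otimes> x = w \<otimes> (x0 \<otimes> x)" using x0 w x0c WI_carr[OF I x] by (simp add: m_assoc)
    moreover have "x0 \<otimes> x \<in> generate G I" using x x0 subgroup.m_closed[OF WI_sub[OF I]] by blast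
    ultimately show "len u \<le> len (u \<otimes> x)" using minu' by auto
  qed
  have add: "\<forall>x\<in>generate G I. len (u \<otimes> x) = len u + len x"
  proof
    fix x assume x: "x \<in> generate G I"
    obtain xs where xs: "xs \<in> lists I" "red xs" "wp xs = x" using WI_red[OF I x] by auto
    show "len (u \<otimes> x) = len u + len x" using min_add[OF I uc minu xs(1,2)] xs unfolding red_def by simp
  qed
  have umin: "u \<in> min_reps G S I"
    unfolding min_reps_def using uc add generate.incl[of _ I G] len_S I by auto
  let ?p = "inv u \<otimes> w"
  have p: "?p = inv x0" using x0 w x0c by (simp add: inv_mult_group m_assoc)
  have pI: "?p \<in> generate G I" using p x0 subgroup.m_inv_closed[OF WI_sub[OF I]] by simp
  have pc: "?p \<in> carrier G" using uc w by simp
  have wp_: "w \<otimes> inv ?p = u" using uc w by (simp add: inv_mult_group m_assoc)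
  have uniq: "q = ?p" if q: "q \<in> generate G I" "w \<otimes> inv q \<in> min_reps G S I" for q
  proof -
    have qc: "q \<in> carrier G" using WI_carr[OF I q(1)] .
    let ?u' = "w \<otimes> inv q"
    let ?y = "?p \<otimes> inv q"
    have yI: "?y \<in> generate G I" using pI q(1) subgroup.m_closed[OF WI_sub[OF I]] subgroup.m_inv_closed[OF WI_sub[OF I]] by blast
    have yc: "?y \<in> carrier G" using pc qc by simp
    have uy: "u \<otimes> ?y = ?u'" using uc w qc by (simp add: m_assoc[symmetric])
    have "?y = \<one>"
    proof (rule ccontr)
      assume ne: "?y \<noteq> \<one>"
      obtain ys where ys: "ys \<in> lists I" "red ys" "wp ys = ?y" using WI_red[OF I yI] by auto
      have "ys \<noteq> []" using ys ne by auto
      then obtain zs s where zs: "ys = zs @ [s]" using rev_exhaust by blast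
      have zsI: "zs \<in> lists I" "s \<in> I" using ys zs by auto
      then have zsS: "zs \<in> lists S" "s \<in> S" using I by auto
      have rz: "red zs" and lz: "len (wp zs \<otimes> s) = len (wp zs) + 1" using red_snoc ys zs by auto
      have yz: "?y = wp zs \<otimes> s" using ys zs wp_snoc[OF zsS] by simp
      have zc: "wp zs \<in> carrier G" using zsS by simp
      have "?u' \<otimes> s = u \<otimes> wp zs" using uy[symmetric] yz uc zc zsS S_inv2 by (simp add: m_assoc)
      then have "len (?u' \<otimes> s) = len u + len (wp zs)" using add wp_WI[OF I zsI(1)] by simp
      moreover have "len ?u' = len u + len (wp zs) + 1"
      proof -
        have "len ?u' = len (u \<otimes> ?y)" using uy by simp
        also have "\<dots> = len u + len ?y" using add yI by blast
        finally show ?thesis using yz lz by simp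
      qed
      moreover have "len ?u' < len (?u' \<otimes> s)" using q(2) zsI unfolding min_reps_def by auto
      ultimately show False by linarith
    qed
    then have "?p \<otimes> inv q \<otimes> q = q" using qc by simp
    then show "q = ?p" using pc qc by (simp add: m_assoc)
  qed
  have "parabolic_comp G S I w = ?p"
    unfolding parabolic_comp_def
  proof (rule the_equality)
    show "?p \<in> generate G I \<and> w \<otimes> inv ?p \<in> min_reps G S I" using pI wp_ umin by simp
  next
    fix q assume "q \<in> generate G I \<and> w \<otimes> inv q \<in> min_reps G S I"
    then show "q = ?p" using uniq by blast
  qed
  then show ?thesis using umin pI add by blast
qed


abbreviation "pc \<equiv> parabolic_comp G S"

lemma pc_WI: "I \<subseteq> S \<Longrightarrow> w \<in> carrier G \<Longrightarrow> pc I w \<in> generate G I"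
  using pc_main by metis

lemma pc_carr: "I \<subseteq> S \<Longrightarrow> w \<in> carrier G \<Longrightarrow> pc I w \<in> carrier G"
  using pc_WI WI_carr by blast

lemma minrep_WI: assumes I: "I \<subseteq> S" and u: "u \<in> min_reps G S I" "u \<in> generate G I" shows "u = \<one>"
proof (rule ccontr)
  assume ne: "u \<noteq> \<one>"
  obtain ys where ys: "ys \<in> lists I" "red ys" "wp ys = u" using WI_red[OF I u(2)] by auto
  have "ys \<noteq> []" using ys ne by auto
  then obtain zs s where zs: "ys = zs @ [s]" using rev_exhaust by blast
  have zsI: "zs \<in> lists I" "s \<in> I" using ys zs by auto
  then have zsS: "zs \<in> lists S" "s \<in> S" using I by auto
  have lz: "len (wp zs \<otimes> s) = len (wp zs) + 1" using red_snoc ys zs by auto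
  have uz: "u = wp zs \<otimes> s" using ys zs wp_snoc[OF zsS] by simp
  have "u \<otimes> s = wp zs" using uz zsS S_inv2 by (simp add: m_assoc)
  moreover have "len u < len (u \<otimes> s)" using u(1) zsI unfolding min_reps_def by auto
  ultimately show False using lz uz by simp
qed

lemma pc_in: assumes I: "I \<subseteq> S" and w: "w \<in> generate G I" shows "pc I w = w"
proof -
  have wc: "w \<in> carrier G" using WI_carr[OF I w] .
  obtain u where u: "u \<in> min_reps G S I" "inv u \<otimes> w \<in> generate G I" "pc I w = inv u \<otimes> w"
    using pc_main[OF I wc] by blast
  have uc: "u \<in> carrier G" using u(1) unfolding min_reps_def by auto
  have "inv u \<otimes> w \<otimes> inv w \<in> generate G I"
    using u(2) w subgroup.m_closed[OF WI_sub[OF I]] subgroup.m_inv_closed[OF WI_sub[OF I]] by blast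
  then have "inv u \<in> generate G I" using uc wc by (simp add: m_assoc)
  then have "inv (inv u) \<in> generate G I" using subgroup.m_inv_closed[OF WI_sub[OF I]] by blast
  then have "u \<in> generate G I" using uc by simp
  then have "u = \<one>" using minrep_WI[OF I u(1)] by simp
  then show ?thesis using u(3) wc by simp
qed

lemma pc_len: assumes I: "I \<subseteq> S" and w: "w \<in> carrier G"
  shows "\<exists>u \<in> carrier G. w = u \<otimes> pc I w \<and> len w = len u + len (pc I w) \<and> (\<forall>x \<in> generate G I. len (u \<otimes> x) = len u + len x)"
proof -
  obtain u where u: "u \<in> min_reps G S I" "inv u \<otimes> w \<in> generate G I" "pc I w = inv u \<otimes> w"
    "\<forall>x\<in>generate G I. len (u \<otimes> x) = len u + len x"
    using pc_main[OF I w] by blast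
  have uc: "u \<in> carrier G" using u(1) unfolding min_reps_def by auto
  have e: "w = u \<otimes> pc I w" using u(3) uc w by simp
  then have "len w = len u + len (pc I w)" using u(4) pc_WI[OF I w] by metis
  then show ?thesis using uc e u(4) by blast
qed

lemma des_pc: assumes I: "I \<subseteq> S" and w: "w \<in> carrier G" and s: "s \<in> I"
  shows "s \<in> des w \<longleftrightarrow> s \<in> des (pc I w)"
proof -
  obtain u where u: "u \<in> carrier G" "w = u \<otimes> pc I w" "len w = len u + len (pc I w)"
    "\<forall>x \<in> generate G I. len (u \<otimes> x) = len u + len x" using pc_len[OF I w] by blast
  have sS: "s \<in> S" using s I by auto
  have pI: "pc I w \<in> generate G I" using pc_WI[OF I w] .
  have psI: "pc I w \<otimes> s \<in> generate G I" using pI generate.incl[OF s] subgroup.m_closed[OF WI_sub[OF I]] by blast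
  have "w \<otimes> s = u \<otimes> (pc I w \<otimes> s)" using u(1,2) pc_carr[OF I w] sS by (metis m_assoc S_c)
  then have "len (w \<otimes> s) = len u + len (pc I w \<otimes> s)" using u(4) psI by simp
  then show ?thesis using u(3) sS unfolding descents_def by auto
qed

lemma supp_pc: assumes I: "I \<subseteq> S" and w: "w \<in> carrier G" shows "supp (pc I w) \<subseteq> supp w"
proof
  fix a assume "a \<in> supp (pc I w)"
  then obtain ws where ws: "red ws" "wp ws = pc I w" "a \<in> set ws" unfolding supp_def' by blast
  obtain u where u: "u \<in> carrier G" "w = u \<otimes> pc I w" "len w = len u + len (pc I w)"
    using pc_len[OF I w] by blast
  obtain ru where ru: "red ru" "wp ru = u" using red_ex[OF u(1)] by blast
  have S: "ru \<in> lists S" "ws \<in> lists S" using ru ws red_S by auto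
  have e: "wp (ru @ ws) = w" using wp_appendS[OF S] ru ws u by simp
  have "red (ru @ ws)" using e ru ws u S unfolding red_def by simp
  then have "set (ru @ ws) \<subseteq> supp w" using in_supp e by metis
  then show "a \<in> supp w" using ws by auto
qed

abbreviation "cle \<equiv> cox_le G S"

lemma le_refl: "y \<in> carrier G \<Longrightarrow> cle y y"
  unfolding cox_le_def using pc_in[OF supp_S in_Wsupp] by blast

lemma gen_empty: "generate G {} = {\<one>}"
  using gen_words[of "{}"] by auto

lemma le_one: assumes "y \<in> carrier G" shows "cle \<one> y"
  unfolding cox_le_def supp_one using pc_WI[of "{}" y] assms gen_empty by auto

lemma le_supp: "y \<in> carrier G \<Longrightarrow> cle z y \<Longrightarrow> supp z \<subseteq> supp y"
  unfolding cox_le_def using supp_pc[OF supp_S] by metis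

lemma le_strict: assumes "y \<in> carrier G" "cle z y" "z \<noteq> y" shows "card (supp z) < card (supp y)"
proof -
  have sub: "supp z \<subseteq> supp y" using le_supp assms by blast
  have "supp z \<noteq> supp y"
  proof
    assume eq: "supp z = supp y"
    have "pc (supp z) y = y" using eq pc_in[OF supp_S in_Wsupp[OF assms(1)]] by simp
    then show False using assms(2,3) unfolding cox_le_def by simp
  qed
  then show ?thesis using sub supp_fin psubset_card_mono by blast
qed

lemma le_fin: "finite {z \<in> carrier G. cle z y}"
proof -
  have "{z \<in> carrier G. cle z y} \<subseteq> (\<lambda>I. pc I y) ` Pow S"
  proof
    fix z assume "z \<in> {z \<in> carrier G. cle z y}"
    then have "z = pc (supp z) y" unfolding cox_le_def by simp
    then show "z \<in> (\<lambda>I. pc I y) ` Pow S" using supp_S by blast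
  qed
  then show ?thesis using S_fin finite_subset by blast
qed

definition hh :: "'a \<Rightarrow> int" where
  "hh z = (if supp z = des z then (-1) ^ card (supp z) else 0)"

lemma supp_pcD: assumes v: "v \<in> carrier G" and D: "D \<subseteq> des v"
  shows "supp (pc D v) = D" "des (pc D v) = D"
proof -
  have DS: "D \<subseteq> S" using D des_S by blast
  have c: "pc D v \<in> carrier G" using pc_carr[OF DS v] .
  have a: "supp (pc D v) \<subseteq> D" using supp_WI[OF DS pc_WI[OF DS v]] .
  have b: "D \<subseteq> des (pc D v)" using des_pc[OF DS v] D by blast
  have "des (pc D v) \<subseteq> supp (pc D v)" using des_supp[OF c] .
  then show "supp (pc D v) = D" "des (pc D v) = D" using a b by auto
qed

lemma ideal_char: assumes v: "v \<in> carrier G"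
  shows "{z \<in> carrier G. cle z v \<and> supp z = des z} = (\<lambda>D. pc D v) ` Pow (des v)"
proof
  show "(\<lambda>D. pc D v) ` Pow (des v) \<subseteq> {z \<in> carrier G. cle z v \<and> supp z = des z}"
  proof
    fix z assume "z \<in> (\<lambda>D. pc D v) ` Pow (des v)"
    then obtain D where D: "D \<subseteq> des v" "z = pc D v" by auto
    have DS: "D \<subseteq> S" using D des_S by blast
    show "z \<in> {z \<in> carrier G. cle z v \<and> supp z = des z}"
      using supp_pcD[OF v D(1)] D pc_carr[OF DS v] unfolding cox_le_def by simp
  qed
next
  show "{z \<in> carrier G. cle z v \<and> supp z = des z} \<subseteq> (\<lambda>D. pc D v) ` Pow (des v)"
  proof
    fix z assume z: "z \<in> {z \<in> carrier G. cle z v \<and> supp z = des z}"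
    let ?D = "supp z"
    have "pc ?D v = z" using z unfolding cox_le_def by blast
    then have zD: "z = pc ?D v" by simp
    have "?D \<subseteq> des v"
    proof
      fix s assume s: "s \<in> ?D"
      then have "s \<in> des (pc ?D v)" using z zD by simp
      then show "s \<in> des v" using des_pc[OF supp_S v s] by simp
    qed
    then show "z \<in> (\<lambda>D. pc D v) ` Pow (des v)" using zD by blast
  qed
qed

lemma main_sum: assumes v: "v \<in> carrier G"
  shows "(\<Sum>z \<in> {z \<in> carrier G. cle z v}. smult (hh z) ([:0, 1:] ^ card (supp z))) = [:1, -1:] ^ card (des v)"
proof -
  let ?A = "{z \<in> carrier G. cle z v}"
  let ?B = "{z \<in> carrier G. cle z v \<and> supp z = des z}"
  have "(\<Sum>z \<in> ?A. smult (hh z) ([:0, 1:] ^ card (supp z))) = (\<Sum>z \<in> ?B. smult (hh z) ([:0, 1:] ^ card (supp z)))"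
    by (rule sum.mono_neutral_right[OF le_fin]) (auto simp: hh_def)
  also have "\<dots> = (\<Sum>z \<in> ?B. smult ((-1) ^ card (supp z)) ([:0, 1:] ^ card (supp z)))"
    by (rule sum.cong) (auto simp: hh_def)
  also have "\<dots> = (\<Sum>D \<in> Pow (des v). smult ((-1) ^ card (supp (pc D v))) ([:0, 1:] ^ card (supp (pc D v))))"
    unfolding ideal_char[OF v]
  proof (rule sum.reindex_cong[where l = "\<lambda>D. pc D v"])
    show "inj_on (\<lambda>D. pc D v) (Pow (des v))"
      by (rule inj_onI) (metis PowD supp_pcD(1)[OF v])
  qed auto
  also have "\<dots> = (\<Sum>D \<in> Pow (des v). smult ((-1) ^ card D) ([:0, 1:] ^ card D))"
    by (rule sum.cong) (auto simp: supp_pcD(1)[OF v])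
  also have "\<dots> = [:1, -1:] ^ card (des v)"
    using binom_poly[of "des v"] des_S S_fin finite_subset by metis
  finally show ?thesis .
qed

lemma hh_sum_zero: assumes v: "v \<in> carrier G" "v \<noteq> \<one>"
  shows "(\<Sum>z \<in> {z \<in> carrier G. cle z v}. hh z) = 0"
proof -
  have "poly (\<Sum>z \<in> {z \<in> carrier G. cle z v}. smult (hh z) ([:0, 1:] ^ card (supp z))) 1 = poly ([:1, -1:] ^ card (des v)) 1"
    using main_sum[OF v(1)] by simp
  moreover have "card (des v) \<noteq> 0"
    using des_nonempty[OF v] des_S S_fin finite_subset card_0_eq by metis
  ultimately show ?thesis by (simp add: poly_sum)
qed


abbreviation "mu \<equiv> moebius (carrier G) cle"

lemma mu_is: "is_moebius (carrier G) cle mu"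
  by (rule moebius_is[where m = "\<lambda>z. card (supp z)"]) (rule le_strict, auto)

lemma mu_eq: "mu x y = (if x \<in> carrier G \<and> y \<in> carrier G \<and> cle x y then (if x = y then 1
          else - (\<Sum>z\<in>{z\<in>carrier G. cle x z \<and> cle z y \<and> z \<noteq> y}. mu x z)) else 0)"
  using mu_is unfolding is_moebius_def by blast

lemma hh_one: "hh \<one> = 1"
proof -
  have "des \<one> = {}" using des_supp[of "\<one>"] supp_one by simp
  then show ?thesis unfolding hh_def supp_one by simp
qed

lemma mu_hh: "x \<in> carrier G \<Longrightarrow> mu \<one> x = hh x"
proof (induction x rule: measure_induct_rule[of "\<lambda>z. card (supp z)"])
  case (less x)
  show ?case
  proof (cases "x = \<one>")
    case True
    then show ?thesis using mu_eq[of "\<one>" "\<one>"] le_refl[of "\<one>"] hh_one by simp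
  next
    case False
    let ?B = "{z \<in> carrier G. cle z x}"
    have set_eq: "{z\<in>carrier G. cle \<one> z \<and> cle z x \<and> z \<noteq> x} = ?B - {x}"
      using le_one by auto
    have "(\<Sum>z\<in>?B - {x}. mu \<one> z) = (\<Sum>z\<in>?B - {x}. hh z)"
    proof (rule sum.cong[OF refl])
      fix z assume z: "z \<in> ?B - {x}"
      then have "card (supp z) < card (supp x)" using le_strict less.prems by auto
      then show "mu \<one> z = hh z" using less.IH z by blast
    qed
    moreover have "(\<Sum>z\<in>?B - {x}. hh z) = (\<Sum>z\<in>?B. hh z) - hh x"
      using sum_diff1[OF le_fin, of hh x] le_refl[OF less.prems] less.prems by simp
    moreover have "(\<Sum>z\<in>?B. hh z) = 0" using hh_sum_zero[OF less.prems False] .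
    ultimately have "(\<Sum>z\<in>{z\<in>carrier G. cle \<one> z \<and> cle z x \<and> z \<noteq> x}. mu \<one> z) = - hh x"
      using set_eq by simp
    then show ?thesis using mu_eq[of "\<one>" x] False less.prems le_one[OF less.prems] by simp
  qed
qed

end

theorem mainTheorem13:
  fixes G :: "('a, 'b) monoid_scheme" and S :: "'a set" and v :: 'a
  assumes "coxeter_system G S" and "v \<in> carrier G"
  shows "(\<Sum>x \<in> {x \<in> carrier G. cox_le G S x v}.
            smult (moebius (carrier G) (cox_le G S) \<one>\<^bsub>G\<^esub> x)
                  ([:0, 1:] ^ card (cox_support G S x)))
         = [:1, -1:] ^ card (descents G S v)"
proof -
  have gr: "group G" using assms(1) unfolding coxeter_system_def by simp
  interpret cox G S by (rule cox.intro[OF gr]) (rule cox_axioms.intro[OF assms(1)])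
  have "(\<Sum>x \<in> {x \<in> carrier G. cox_le G S x v}.
            smult (moebius (carrier G) (cox_le G S) \<one>\<^bsub>G\<^esub> x) ([:0, 1:] ^ card (cox_support G S x)))
      = (\<Sum>x \<in> {x \<in> carrier G. cox_le G S x v}. smult (hh x) ([:0, 1:] ^ card (cox_support G S x)))"
    by (rule sum.cong) (auto simp: mu_hh)
  also have "\<dots> = [:1, -1:] ^ card (descents G S v)" by (rule main_sum[OF assms(2)])
  finally show ?thesis .
qed

end
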